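(* Let $q=2^r$ with $r>1$ odd, and $n\ge 1$. Let $\alpha\in\mathbb{F}_q\setminus\{0,1\}$, and let $f\in\mathbb{F}_q[y]$ be a permutation polynomial of degree $q-2$. Then $$h(x_1,\dots,x_n,y)=\bigl(x_1^{q-1}\cdots x_n^{q-1}+\alpha\bigr)f(y)$$ is a permutation polynomial in $\mathbb{F}_q[x_1,\dots,x_n,y]$ of degree $n(q-1)+q-2$.
   Context: $\mathbb{F}_q$ is the finite field with $q$ elements. A polynomial in $m$ variables over $\mathbb{F}_q$ is a permutation polynomial (PP) if, for every $c\in\mathbb{F}_q$, the equation $h=c$ has exactly $q^{m-1}$ solutions in $\mathbb{F}_q^m$. A univariate PP is a polynomial inducing a bijection of $\mathbb{F}_q$. *)

theory Defs
  imports "HOL-Library.FuncSet" "HOL-Library.Cardinality" "HOL-Library.Poly_Mapping" "HOL-Computational_Algebra.Polynomial"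
begin

text \<open>Multivariate polynomials over a commutative ring, with variables of type 'v,
  represented as finitely supported maps from monomials (exponent vectors 'v =>0 nat)
  to coefficients.\<close>

type_synonym ('v, 'a) mpoly = "('v \<Rightarrow>\<^sub>0 nat) \<Rightarrow>\<^sub>0 'a"

definition mvar :: "'v \<Rightarrow> ('v, 'a::comm_semiring_1) mpoly" where
  "mvar v = Poly_Mapping.single (Poly_Mapping.single v 1) 1"

definition mconst :: "'a::comm_semiring_1 \<Rightarrow> ('v, 'a) mpoly" where
  "mconst c = Poly_Mapping.single 0 c"

text \<open>Total degree of a monomial and of a polynomial (degree of the zero polynomial is 0).\<close>
definition mon_deg :: "('v \<Rightarrow>\<^sub>0 nat) \<Rightarrow> nat" where
  "mon_deg m = (\<Sum>v\<in>Poly_Mapping.keys m. Poly_Mapping.lookup m v)"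

definition mtotal_degree :: "('v, 'a::zero) mpoly \<Rightarrow> nat" where
  "mtotal_degree p = (if p = 0 then 0 else Max (mon_deg ` Poly_Mapping.keys p))"

definition meval :: "('v, 'a::comm_semiring_1) mpoly \<Rightarrow> ('v \<Rightarrow> 'a) \<Rightarrow> 'a" where
  "meval p a = (\<Sum>m\<in>Poly_Mapping.keys p.
      Poly_Mapping.lookup p m * (\<Prod>v\<in>Poly_Mapping.keys m. a v ^ Poly_Mapping.lookup m v))"

definition poly_in_var :: "'v \<Rightarrow> 'a::comm_semiring_1 poly \<Rightarrow> ('v, 'a) mpoly" where
  "poly_in_var v f = (\<Sum>i\<le>Polynomial.degree f. mconst (coeff f i) * mvar v ^ i)"

definition is_mpp :: "'v set \<Rightarrow> ('v, 'a::{finite,field}) mpoly \<Rightarrow> bool" where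
  "is_mpp V h \<longleftrightarrow> (\<forall>c::'a. card {a \<in> PiE V (\<lambda>_. (UNIV::'a set)). meval h a = c}
                               = card (UNIV::'a set) ^ (card V - 1))"

end

theory Submission
  imports Defs "HOL-Number_Theory.Residues"
begin

definition Em :: "('v \<Rightarrow>\<^sub>0 nat) \<Rightarrow> ('v \<Rightarrow> 'a::comm_semiring_1) \<Rightarrow> 'a" where
  "Em m a = (\<Prod>v\<in>Poly_Mapping.keys m. a v ^ Poly_Mapping.lookup m v)"

lemma Em_superset: "finite S \<Longrightarrow> Poly_Mapping.keys m \<subseteq> S \<Longrightarrow>
   Em m a = (\<Prod>v\<in>S. a v ^ Poly_Mapping.lookup m v)"
  unfolding Em_def by (rule prod.mono_neutral_left) (auto simp: in_keys_iff)

lemma Em_add: "Em (m1 + m2) a = Em m1 a * Em m2 a"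
proof -
  let ?S = "Poly_Mapping.keys m1 \<union> Poly_Mapping.keys m2"
  have f: "finite ?S" by simp
  have "Em (m1 + m2) a = (\<Prod>v\<in>?S. a v ^ Poly_Mapping.lookup (m1+m2) v)"
    by (rule Em_superset[OF f keys_add])
  also have "\<dots> = (\<Prod>v\<in>?S. a v ^ Poly_Mapping.lookup m1 v) * (\<Prod>v\<in>?S. a v ^ Poly_Mapping.lookup m2 v)"
    by (simp add: lookup_add power_add prod.distrib)
  also have "\<dots> = Em m1 a * Em m2 a"
    by (simp only: Em_superset[of ?S m1 a, OF f, symmetric] Em_superset[of ?S m2 a, OF f, symmetric] Un_upper1 Un_upper2)
  finally show ?thesis .
qed

lemma Em_zero[simp]: "Em 0 a = 1" by (simp add: Em_def)

lemma meval_Em: "meval p a = (\<Sum>m\<in>Poly_Mapping.keys p. Poly_Mapping.lookup p m * Em m a)"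
  by (simp add: meval_def Em_def)

lemma meval_superset: "finite S \<Longrightarrow> Poly_Mapping.keys p \<subseteq> S \<Longrightarrow>
   meval p a = (\<Sum>m\<in>S. Poly_Mapping.lookup p m * Em m a)"
  unfolding meval_Em by (rule sum.mono_neutral_left) (auto simp: in_keys_iff)

lemma meval_add: "meval (p + q) a = meval p a + meval q a"
proof -
  let ?S = "Poly_Mapping.keys p \<union> Poly_Mapping.keys q"
  have f: "finite ?S" by simp
  have "meval (p + q) a = (\<Sum>m\<in>?S. Poly_Mapping.lookup (p+q) m * Em m a)"
    by (rule meval_superset[OF f keys_add])
  also have "\<dots> = (\<Sum>m\<in>?S. Poly_Mapping.lookup p m * Em m a) + (\<Sum>m\<in>?S. Poly_Mapping.lookup q m * Em m a)"
    by (simp add: lookup_add distrib_right sum.distrib)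
  also have "\<dots> = meval p a + meval q a"
    by (simp only: meval_superset[of ?S p a, OF f, symmetric] meval_superset[of ?S q a, OF f, symmetric] Un_upper1 Un_upper2)
  finally show ?thesis .
qed

lemma meval_zero[simp]: "meval 0 a = 0" by (simp add: meval_def)

lemma meval_sum: "finite I \<Longrightarrow> meval (sum g I) a = (\<Sum>i\<in>I. meval (g i) a)"
  by (induction I rule: finite_induct) (auto simp: meval_add)

lemma meval_single[simp]: "meval (Poly_Mapping.single m c) a = c * Em m a"
  by (simp add: meval_Em)

lemma pm_expand: "p = (\<Sum>m\<in>Poly_Mapping.keys p. Poly_Mapping.single m (Poly_Mapping.lookup p m))"
  by (rule poly_mapping_eqI) (auto simp: lookup_sum lookup_single when_def in_keys_iff sum.delta_remove)

lemma meval_mult: "meval (p * q) (a::_ \<Rightarrow> 'a::comm_semiring_1) = meval p a * meval q a"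
proof -
  have "p * q = (\<Sum>m\<in>Poly_Mapping.keys p. \<Sum>m'\<in>Poly_Mapping.keys q.
      Poly_Mapping.single m (Poly_Mapping.lookup p m) * Poly_Mapping.single m' (Poly_Mapping.lookup q m'))"
    apply (subst pm_expand[of p], subst pm_expand[of q])
    by (simp only: sum_product)
  hence "meval (p * q) a = (\<Sum>m\<in>Poly_Mapping.keys p. \<Sum>m'\<in>Poly_Mapping.keys q.
      Poly_Mapping.lookup p m * Poly_Mapping.lookup q m' * Em (m + m') a)"
    by (simp add: meval_sum mult_single)
  also have "\<dots> = (\<Sum>m\<in>Poly_Mapping.keys p. \<Sum>m'\<in>Poly_Mapping.keys q.
      (Poly_Mapping.lookup p m * Em m a) * (Poly_Mapping.lookup q m' * Em m' a))"
    by (intro sum.cong refl) (simp add: Em_add mult_ac)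
  also have "\<dots> = meval p a * meval q a"
    unfolding meval_Em by (simp only: sum_product)
  finally show ?thesis .
qed

lemma meval_one[simp]: "meval 1 a = 1"
  by (simp add: meval_Em)

lemma meval_power: "meval (p ^ k) a = meval p a ^ k"
  by (induction k) (auto simp: meval_mult)

lemma meval_prod: "meval (\<Prod>i\<in>I. g i) a = (\<Prod>i\<in>I. meval (g i) a)"
  by (induction I rule: infinite_finite_induct) (auto simp: meval_mult)

lemma meval_mvar[simp]: "meval (mvar v) a = a v"
  by (simp add: mvar_def Em_def)

lemma meval_mconst[simp]: "meval (mconst c) a = c"
  by (simp add: mconst_def)

lemma meval_poly_in_var: "meval (poly_in_var v f) a = poly f (a v)"
  by (simp add: poly_in_var_def meval_sum meval_mult meval_power poly_altdef)


lemma char2: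
  assumes "CARD('a::{finite,field}) = 2 ^ r" "r > 0"
  shows "(1::'a) + 1 = 0"
proof -
  have pos: "CHAR('a) > 0" by (rule finite_imp_CHAR_pos) simp
  have pr: "prime CHAR('a)" using prime_CHAR_semidom[OF pos] .
  have "CHAR('a) dvd 2 ^ r" using CHAR_dvd_CARD[where 'a='a] assms by simp
  hence "CHAR('a) dvd 2" using pr prime_dvd_power by blast
  hence "CHAR('a) = 2" using pr by (metis prime_nat_iff two_is_prime_nat prime_gt_1_nat less_numeral_extra(4) nat_dvd_not_less)
  hence "of_nat 2 = (0::'a)" by (metis of_nat_CHAR)
  thus ?thesis by simp
qed

lemma pow_card_minus1:
  fixes x :: "'a::{finite,field}"
  assumes "x \<noteq> 0"
  shows "x ^ (CARD('a) - 1) = 1"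
proof -
  let ?U = "UNIV - {0::'a}"
  have b: "bij_betw (\<lambda>y. x * y) ?U ?U"
    by (rule bij_betwI[where g="\<lambda>y. y / x"]) (use assms in auto)
  have "prod id ?U = prod ((\<lambda>y. x * y)) ?U"
    using prod.reindex_bij_betw[OF b, of id] by simp
  also have "\<dots> = x ^ card ?U * prod id ?U"
    by (simp add: prod.distrib)
  finally have e: "prod id ?U = x ^ card ?U * prod id ?U" .
  have nz: "prod id ?U \<noteq> 0" by simp
  have "x ^ card ?U = 1" using e nz by (metis mult_cancel_right1)
  moreover have "card ?U = CARD('a) - 1" by (simp add: card_Diff_subset)
  ultimately show ?thesis by simp
qed

lemma mvar_pow: "(mvar i :: ('v,'a::comm_semiring_1) mpoly) ^ k = Poly_Mapping.single (Poly_Mapping.single i k) 1"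
proof (induction k)
  case 0 then show ?case by simp
next
  case (Suc k) then show ?case
    by (simp add: mvar_def mult_single single_add[symmetric] add.commute)
qed

lemma prod_mvar_pow: "(\<Prod>i<n. (mvar i :: (nat,'a::comm_semiring_1) mpoly) ^ k)
   = Poly_Mapping.single (\<Sum>i<n. Poly_Mapping.single i k) 1"
  by (induction n) (simp_all add: mvar_pow mult_single add.commute)

lemma poly_in_var_expand: "poly_in_var v f =
  (\<Sum>i\<le>Polynomial.degree f. Poly_Mapping.single (Poly_Mapping.single v i) (Polynomial.coeff f i))"
  by (simp add: poly_in_var_def mvar_pow mconst_def mult_single)

lemma mon_deg_superset: "finite S \<Longrightarrow> Poly_Mapping.keys m \<subseteq> S \<Longrightarrow>
   mon_deg m = (\<Sum>v\<in>S. Poly_Mapping.lookup m v)"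
  unfolding mon_deg_def by (rule sum.mono_neutral_left) (auto simp: in_keys_iff)

lemma mon_deg_add: "mon_deg (m1 + m2) = mon_deg m1 + mon_deg m2"
proof -
  let ?S = "Poly_Mapping.keys m1 \<union> Poly_Mapping.keys m2"
  have f: "finite ?S" by simp
  have "mon_deg (m1 + m2) = (\<Sum>v\<in>?S. Poly_Mapping.lookup (m1+m2) v)"
    by (rule mon_deg_superset[OF f keys_add])
  also have "\<dots> = (\<Sum>v\<in>?S. Poly_Mapping.lookup m1 v) + (\<Sum>v\<in>?S. Poly_Mapping.lookup m2 v)"
    by (simp add: lookup_add sum.distrib)
  also have "\<dots> = mon_deg m1 + mon_deg m2"
    by (simp only: mon_deg_superset[of ?S m1, OF f, symmetric] mon_deg_superset[of ?S m2, OF f, symmetric] Un_upper1 Un_upper2)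
  finally show ?thesis .
qed

lemma mon_deg_single[simp]: "mon_deg (Poly_Mapping.single v k) = k"
  by (simp add: mon_deg_def)

lemma mon_deg_zero[simp]: "mon_deg 0 = 0"
  by (simp add: mon_deg_def)

lemma mon_deg_sum: "mon_deg (\<Sum>i<n. Poly_Mapping.single i k) = n * k"
  by (induction n) (simp_all add: mon_deg_add)

theorem mainTheorem8:
  fixes f :: "'a::{finite,field} poly" and \<alpha> :: 'a and r n :: nat
    and h :: "(nat, 'a) mpoly"
  assumes "CARD('a) = 2 ^ r" and "odd r" and "r > 1" and "n \<ge> 1"
    and "\<alpha> \<noteq> 0" and "\<alpha> \<noteq> 1"
    and "bij (poly f)" and "Polynomial.degree f = CARD('a) - 2"
    and "h = ((\<Prod>i<n. mvar i ^ (CARD('a) - 1)) + mconst \<alpha>) * poly_in_var n f"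
  shows "is_mpp {0..n} h \<and> mtotal_degree h = n * (CARD('a) - 1) + (CARD('a) - 2)"
proof
  let ?q = "CARD('a)"
  have q4: "?q \<ge> 4"
  proof -
    have "(2::nat) ^ 2 \<le> 2 ^ r" using assms(3) by (intro power_increasing) auto
    thus ?thesis using assms(1) by simp
  qed
  have c2: "(1::'a) + 1 = 0" using char2[OF assms(1)] assms(3) by simp
  define P where "P = (\<lambda>a::nat \<Rightarrow> 'a. \<Prod>i<n. a i ^ (?q - 1))"
  define k where "k = (\<lambda>a. P a + \<alpha>)"
  have P01: "P a = 0 \<or> P a = 1" for a
  proof (cases "\<forall>i<n. a i \<noteq> 0")
    case True
    have "P a = 1" unfolding P_def
    proof (rule prod.neutral, rule ballI)
      fix i assume "i \<in> {..<n}"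
      then show "a i ^ (?q - 1) = 1" using True by (intro pow_card_minus1) auto
    qed
    then show ?thesis by simp
  next
    case False
    then obtain i where "i < n" "a i = 0" by blast
    moreover have "?q - 1 \<noteq> 0" using q4 by simp
    ultimately show ?thesis unfolding P_def
      by (intro disjI1 prod_zero) auto
  qed
  have knz: "k a \<noteq> 0" for a
  proof
    assume "k a = 0"
    hence al: "\<alpha> = - P a" unfolding k_def by (simp add: add_eq_0_iff)
    have m1: "-(1::'a) = 1" by (metis c2 add_eq_0_iff)
    show False
    proof (cases "P a = 0")
      case True then show ?thesis using al assms(5) by simp
    next
      case False then have "P a = 1" using P01[of a] by blast
      then show ?thesis using al m1 assms(6) by simp
    qed
  qed
  have mev: "meval h a = k a * poly f (a n)" for a
    by (simp add: assms(9) meval_mult meval_add meval_prod meval_power meval_poly_in_var k_def P_def)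
  show "is_mpp {0..n} h"
    unfolding is_mpp_def
  proof
    fix c :: 'a
    define Gf where "Gf = (\<lambda>x. x(n := inv_into UNIV (poly f) (c / k x)))"
    have kG: "k (Gf x) = k x" for x
      unfolding Gf_def k_def P_def by (intro arg_cong2[where f="(+)"] prod.cong) auto
    have pinv: "poly f (inv_into UNIV (poly f) y) = y" for y
      using assms(7) by (simp add: bij_is_surj surj_f_inv_f)
    have eq: "{a \<in> PiE {0..n} (\<lambda>_. (UNIV::'a set)). meval h a = c} = Gf ` PiE {..<n} (\<lambda>_. UNIV)"
    proof (intro equalityI subsetI)
      fix a assume "a \<in> {a \<in> PiE {0..n} (\<lambda>_. (UNIV::'a set)). meval h a = c}"
      hence a1: "a \<in> PiE {0..n} (\<lambda>_. UNIV)" and a2: "k a * poly f (a n) = c" by (auto simp: mev)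
      define x where "x = restrict a {..<n}"
      have kx: "k x = k a" unfolding x_def k_def P_def by (intro arg_cong2[where f="(+)"] prod.cong) auto
      have "poly f (a n) = c / k a" using a2 knz[of a] by (simp add: field_simps)
      hence an: "a n = inv_into UNIV (poly f) (c / k a)"
        using assms(7) by (simp add: bij_inv_eq_iff)
      have "Gf x = a"
      proof
        fix i show "Gf x i = a i"
          using a1 an kx by (cases "i = n") (auto simp: Gf_def x_def PiE_def extensional_def)
      qed
      moreover have "x \<in> PiE {..<n} (\<lambda>_. UNIV)" unfolding x_def by simp
      ultimately show "a \<in> Gf ` PiE {..<n} (\<lambda>_. UNIV)" by blast
    next
      fix a assume "a \<in> Gf ` PiE {..<n} (\<lambda>_. (UNIV::'a set))"
      then obtain x where x: "x \<in> PiE {..<n} (\<lambda>_. UNIV)" and a: "a = Gf x" by blast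
      have "a \<in> PiE {0..n} (\<lambda>_. UNIV)"
        using x unfolding a Gf_def by (auto simp: PiE_def extensional_def)
      moreover have "meval h a = c"
        unfolding mev a using kG[of x] knz[of x] by (simp add: Gf_def pinv)
      ultimately show "a \<in> {a \<in> PiE {0..n} (\<lambda>_. (UNIV::'a set)). meval h a = c}" by blast
    qed
    have inj: "inj_on Gf (PiE {..<n} (\<lambda>_. UNIV))"
    proof
      fix x y assume x: "x \<in> PiE {..<n} (\<lambda>_. (UNIV::'a set))" and y: "y \<in> PiE {..<n} (\<lambda>_. (UNIV::'a set))"
        and e: "Gf x = Gf y"
      show "x = y"
      proof
        fix i show "x i = y i"
        proof (cases "i = n")
          case True then show ?thesis using x y by (auto simp: PiE_def extensional_def)
        next
          case False then show ?thesis using fun_cong[OF e, of i] by (simp add: Gf_def)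
        qed
      qed
    qed
    have "card {a \<in> PiE {0..n} (\<lambda>_. (UNIV::'a set)). meval h a = c} = card (PiE {..<n} (\<lambda>_. (UNIV::'a set)))"
      unfolding eq using inj by (rule card_image)
    also have "\<dots> = ?q ^ n" by (simp add: card_PiE)
    finally show "card {a \<in> PiE {0..n} (\<lambda>_. (UNIV::'a set)). meval h a = c} = ?q ^ (card {0..n} - 1)"
      by simp
  qed
next
  let ?q = "CARD('a)"
  let ?d = "Polynomial.degree f"
  let ?D = "n * (?q - 1) + (?q - 2)"
  have q4: "?q \<ge> 4"
  proof -
    have "(2::nat) ^ 2 \<le> 2 ^ r" using assms(3) by (intro power_increasing) auto
    thus ?thesis using assms(1) by simp
  qed
  define M :: "nat \<Rightarrow>\<^sub>0 nat" where "M = (\<Sum>i<n. Poly_Mapping.single i (?q - 1))"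
  define A where "A = (\<Sum>i\<le>?d. Poly_Mapping.single (M + Poly_Mapping.single n i) (Polynomial.coeff f i))"
  define B where "B = (\<Sum>i\<le>?d. Poly_Mapping.single (Poly_Mapping.single n i) (\<alpha> * Polynomial.coeff f i))"
  have hAB: "h = A + B"
    unfolding assms(9) prod_mvar_pow poly_in_var_expand A_def B_def M_def
    by (simp add: distrib_right sum_distrib_left mconst_def mult_single sum.distrib)
  have lM0: "Poly_Mapping.lookup M 0 = ?q - 1"
    unfolding M_def using assms(4)
    by (simp add: lookup_sum lookup_single when_def)
  have keys_h: "Poly_Mapping.keys h \<subseteq> (\<lambda>i. M + Poly_Mapping.single n i) ` {..?d} \<union> (\<lambda>i. Poly_Mapping.single n i) ` {..?d}"
  proof -
    have "Poly_Mapping.keys A \<subseteq> (\<lambda>i. M + Poly_Mapping.single n i) ` {..?d}"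
      unfolding A_def using keys_sum[of "\<lambda>i. Poly_Mapping.single (M + Poly_Mapping.single n i) (Polynomial.coeff f i)" "{..?d}"]
      by (auto split: if_splits)
    moreover have "Poly_Mapping.keys B \<subseteq> (\<lambda>i. Poly_Mapping.single n i) ` {..?d}"
      unfolding B_def using keys_sum[of "\<lambda>i. Poly_Mapping.single (Poly_Mapping.single n i) (\<alpha> * Polynomial.coeff f i)" "{..?d}"]
      by (auto split: if_splits)
    ultimately show ?thesis using keys_add[of A B] hAB by blast
  qed
  have mdM: "mon_deg M = n * (?q - 1)" unfolding M_def by (rule mon_deg_sum)
  have le: "mon_deg m \<le> ?D" if "m \<in> Poly_Mapping.keys h" for m
    using keys_h that assms(8) by (auto simp: mon_deg_add mdM)
  define K where "K = M + Poly_Mapping.single n ?d"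
  have fnz: "Polynomial.coeff f ?d \<noteq> 0"
  proof -
    have "f \<noteq> 0" using assms(8) q4 by auto
    thus ?thesis by simp
  qed
  have inj1: "(M + Poly_Mapping.single n i = K) \<longleftrightarrow> i = ?d" for i
  proof
    assume "M + Poly_Mapping.single n i = K"
    hence "Poly_Mapping.single n i = Poly_Mapping.single n ?d" unfolding K_def by simp
    thus "i = ?d" by (metis lookup_single_eq)
  qed (simp add: K_def)
  have ne2: "Poly_Mapping.single n i \<noteq> K" for i
  proof
    assume "Poly_Mapping.single n i = K"
    hence "Poly_Mapping.lookup (Poly_Mapping.single n i) 0 = Poly_Mapping.lookup K 0" by simp
    moreover have "Poly_Mapping.lookup (Poly_Mapping.single n i) 0 = 0"
      using assms(4) by (simp add: lookup_single when_def)
    moreover have "Poly_Mapping.lookup K 0 = ?q - 1"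
      using assms(4) lM0 by (simp add: K_def lookup_add lookup_single when_def)
    ultimately show False using q4 by simp
  qed
  have lK: "Poly_Mapping.lookup h K = Polynomial.coeff f ?d"
    unfolding hAB A_def B_def
    by (simp add: lookup_add lookup_sum lookup_single when_def inj1 ne2)
  have Kin: "K \<in> Poly_Mapping.keys h" using lK fnz by (simp add: in_keys_iff)
  have mdK: "mon_deg K = ?D" by (simp add: K_def mon_deg_add mdM assms(8))
  have hnz: "h \<noteq> 0" using Kin by auto
  have Din: "?D \<in> mon_deg ` Poly_Mapping.keys h"
    by (rule image_eqI[where x=K]) (use mdK Kin in auto)
  show "mtotal_degree h = ?D"
    unfolding mtotal_degree_def using hnz
    apply simp
    apply (rule Max_eqI)
    using le Din by auto
qed

end
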